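(* Let $L$ be a regular zero-one language and $\mathcal{A}_L=\langle Q,A,\cdot,q_0,F\rangle$ its minimal automaton. Then for every subset $P\subseteq Q$, the language $\mathrm{Past}(P)=\{w\in A^*: q_0\cdot w\in P\}$ is also a zero-one language.
   Context: $\mu(L)=\lim_{n\to\infty}|L\cap A^n|/|A|^n$ when it exists; a zero-one language is a regular language $L$ with $\mu(L)$ existing and in $\{0,1\}$. Automata are complete, deterministic, finite, accessible. *)

theory Defs
  imports Complex_Main
begin

text \<open>Words over a finite alphabet A are lists with letters in A (A^* = lists A).\<close>

definition act :: "('s \<Rightarrow> 'a \<Rightarrow> 's) \<Rightarrow> 's \<Rightarrow> 'a list \<Rightarrow> 's" where
  "act delta q w = foldl delta q w"

definition regular :: "'a set \<Rightarrow> 'a list set \<Rightarrow> bool" where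
  "regular A L \<longleftrightarrow> L \<subseteq> lists A \<and>
     (\<exists>(Q::nat set) delta q0 F. finite Q \<and> q0 \<in> Q \<and>
        (\<forall>q\<in>Q. \<forall>a\<in>A. delta q a \<in> Q) \<and> F \<subseteq> Q \<and>
        L = {w \<in> lists A. act delta q0 w \<in> F})"

definition words_len :: "'a set \<Rightarrow> nat \<Rightarrow> 'a list set" where
  "words_len A n = {w \<in> lists A. length w = n}"

definition density_ratio :: "'a set \<Rightarrow> 'a list set \<Rightarrow> nat \<Rightarrow> real" where
  "density_ratio A L n = real (card (L \<inter> words_len A n)) / real (card A) ^ n"

definition zero_one_lang :: "'a set \<Rightarrow> 'a list set \<Rightarrow> bool" where
  "zero_one_lang A L \<longleftrightarrow> regular A L \<and>
     (density_ratio A L \<longlonglongrightarrow> 0 \<or> density_ratio A L \<longlonglongrightarrow> 1)"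

text \<open>The minimal automaton of L (Myhill--Nerode / quotient automaton):
  states are the left quotients u^{-1}L for u in A^*, initial state L = [ ]^{-1}L,
  transition q.a = a^{-1}q, final states are the quotients containing the empty word.\<close>
definition lquot :: "'a set \<Rightarrow> 'a list \<Rightarrow> 'a list set \<Rightarrow> 'a list set" where
  "lquot A u L = {v \<in> lists A. u @ v \<in> L}"

definition min_states :: "'a set \<Rightarrow> 'a list set \<Rightarrow> 'a list set set" where
  "min_states A L = {lquot A u L | u. u \<in> lists A}"

definition min_delta :: "'a set \<Rightarrow> 'a list set \<Rightarrow> 'a \<Rightarrow> 'a list set" where
  "min_delta A q a = lquot A [a] q"

definition min_init :: "'a set \<Rightarrow> 'a list set \<Rightarrow> 'a list set" where
  "min_init A L = lquot A [] L"

definition min_final :: "'a set \<Rightarrow> 'a list set \<Rightarrow> 'a list set set" where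
  "min_final A L = {q \<in> min_states A L. [] \<in> q}"

definition Past :: "'a set \<Rightarrow> 'a list set \<Rightarrow> 'a list set set \<Rightarrow> 'a list set" where
  "Past A L P = {w \<in> lists A. act (min_delta A) (min_init A L) w \<in> P}"

end

theory Submission
  imports Defs
begin

lemma act_Nil[simp]: "act d q [] = q" by (simp add: act_def)
lemma act_Cons[simp]: "act d q (a#w) = act d (d q a) w" by (simp add: act_def)
lemma act_append: "act d q (u@v) = act d (act d q u) v" by (simp add: act_def)

lemma act_closed: "\<forall>q\<in>Q. \<forall>a\<in>A. d q a \<in> Q \<Longrightarrow> q \<in> Q \<Longrightarrow> w \<in> lists A \<Longrightarrow> act d q w \<in> Q"
  by (induction w arbitrary: q) auto

lemma words_len_eq: "words_len A n = {xs. set xs \<subseteq> A \<and> length xs = n}"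
  by (auto simp: words_len_def)

lemma finite_words_len[simp]: "finite A \<Longrightarrow> finite (words_len A n)"
  by (simp add: words_len_eq finite_lists_length_eq)

lemma card_words_len: "finite A \<Longrightarrow> card (words_len A n) = card A ^ n"
  by (simp add: words_len_eq card_lists_length_eq)

definition badc :: "'a set \<Rightarrow> ('q\<Rightarrow>'a\<Rightarrow>'q) \<Rightarrow> ('q \<Rightarrow> bool) \<Rightarrow> 'q \<Rightarrow> nat \<Rightarrow> nat" where
  "badc A d B q n = card {w \<in> words_len A n. B (act d q w)}"

lemma badc_le: "finite A \<Longrightarrow> badc A d B q n \<le> card A ^ n"
  unfolding badc_def by (metis (no_types, lifting) card_mono card_words_len finite_words_len mem_Collect_eq subsetI)

lemma badc_prefix:
  assumes "finite A" "u \<in> lists A" "length u = m"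
  shows "badc A d B (act d q u) n \<le> badc A d B q (m+n)"
  unfolding badc_def
proof (rule card_inj_on_le[where f="\<lambda>x. u@x"])
  show "inj_on ((@) u) {w \<in> words_len A n. B (act d (act d q u) w)}" by (auto simp: inj_on_def)
  show "(@) u ` {w \<in> words_len A n. B (act d (act d q u) w)} \<subseteq> {w \<in> words_len A (m + n). B (act d q w)}"
    using assms by (auto simp: words_len_def act_append)
qed (use assms in simp)

lemma badc_split:
  assumes "finite A"
  shows "badc A d B q (m+n) \<le> (\<Sum>u\<in>words_len A m. badc A d B (act d q u) n)"
proof -
  have "{w \<in> words_len A (m+n). B (act d q w)} \<subseteq>
        (\<Union>u\<in>words_len A m. ((@) u) ` {x \<in> words_len A n. B (act d (act d q u) x)})"
  proof
    fix w assume w: "w \<in> {w \<in> words_len A (m+n). B (act d q w)}"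
    have "w = take m w @ drop m w" by simp
    moreover have "take m w \<in> words_len A m" "drop m w \<in> words_len A n"
      using w by (auto simp: words_len_def dest: in_set_takeD in_set_dropD)
    moreover have "B (act d (act d q (take m w)) (drop m w))"
      using w by (metis (no_types, lifting) act_append append_take_drop_id mem_Collect_eq)
    ultimately show "w \<in> (\<Union>u\<in>words_len A m. ((@) u) ` {x \<in> words_len A n. B (act d (act d q u) x)})"
      by blast
  qed
  hence "badc A d B q (m+n) \<le> card (\<Union>u\<in>words_len A m. ((@) u) ` {x \<in> words_len A n. B (act d (act d q u) x)})"
    unfolding badc_def by (intro card_mono) (auto simp: assms)
  also have "\<dots> \<le> (\<Sum>u\<in>words_len A m. card (((@) u) ` {x \<in> words_len A n. B (act d (act d q u) x)}))"
    by (rule card_UN_le) (simp add: assms)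
  also have "\<dots> \<le> (\<Sum>u\<in>words_len A m. badc A d B (act d q u) n)"
    unfolding badc_def by (intro sum_mono card_image_le) (simp add: assms)
  finally show ?thesis .
qed

lemma badc_window:
  assumes fin: "finite A" and a0: "a0 \<in> A"
    and H: "\<forall>u\<in>words_len A n. \<exists>v\<in>lists A. length v \<le> M \<and> B (act d (act d p u) v)"
  shows "card A ^ n \<le> (\<Sum>i\<le>M. badc A d B p (n+i) * card A ^ (M-i))"
proof -
  define V where "V u = (SOME v. v\<in>lists A \<and> length v \<le> M \<and> B (act d (act d p u) v))" for u
  have V: "V u \<in> lists A \<and> length (V u) \<le> M \<and> B (act d (act d p u) (V u))" if "u \<in> words_len A n" for u
    using H that unfolding V_def by (metis (mono_tags, lifting) someI_ex)
  define ext where "ext u = u @ V u @ replicate (M - length (V u)) a0" for u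
  define S where "S = {w \<in> words_len A (n+M). \<exists>i\<le>M. B (act d p (take (n+i) w))}"
  define T where "T i = (\<lambda>(x,y). x@y) ` ({x \<in> words_len A (n+i). B (act d p x)} \<times> words_len A (M-i))" for i
  have c0: "card A ^ n = card (words_len A n)" by (simp add: card_words_len fin)
  have c1: "card (words_len A n) \<le> card S"
  proof (rule card_inj_on_le[where f=ext])
    show "inj_on ext (words_len A n)"
    proof (rule inj_onI)
      fix x y assume "x \<in> words_len A n" "y \<in> words_len A n" "ext x = ext y"
      hence "take n (ext x) = take n (ext y)" "length x = n" "length y = n" by (auto simp: words_len_def)
      thus "x = y" by (simp add: ext_def)
    qed
    show "ext ` words_len A n \<subseteq> S"
    proof
      fix w assume "w \<in> ext ` words_len A n"
      then obtain u where u: "u \<in> words_len A n" and w: "w = ext u" by blast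
      have "take (n + length (V u)) w = u @ V u" using u unfolding w ext_def words_len_def by simp
      moreover have "w \<in> words_len A (n+M)" using u V[OF u] a0 unfolding w ext_def words_len_def by auto
      moreover have "B (act d p (take (n + length (V u)) w))"
        using calculation(1) V[OF u] by (simp add: act_append)
      ultimately show "w \<in> S" unfolding S_def using V[OF u] by blast
    qed
    show "finite S" unfolding S_def using fin by simp
  qed
  have "S \<subseteq> (\<Union>i\<in>{..M}. T i)"
  proof
    fix w assume "w \<in> S"
    then obtain i where i: "i \<le> M" "B (act d p (take (n+i) w))" and w: "w \<in> words_len A (n+M)"
      unfolding S_def by blast
    have "w = take (n+i) w @ drop (n+i) w" by simp
    moreover have "take (n+i) w \<in> words_len A (n+i)" "drop (n+i) w \<in> words_len A (M-i)"
      using w i by (auto simp: words_len_def dest: in_set_takeD in_set_dropD)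
    hence "w \<in> T i" unfolding T_def using i
      by (intro image_eqI[where x="(take (n+i) w, drop (n+i) w)"]) auto
    thus "w \<in> (\<Union>i\<in>{..M}. T i)" using i by blast
  qed
  hence "card S \<le> card (\<Union>i\<in>{..M}. T i)" by (intro card_mono finite_UN_I) (simp_all add: T_def fin)
  with c0 c1 have "card A ^ n \<le> card (\<Union>i\<in>{..M}. T i)" by linarith
  also have "\<dots> \<le> (\<Sum>i\<le>M. card (T i))" by (rule card_UN_le) simp
  also have "\<dots> \<le> (\<Sum>i\<le>M. badc A d B p (n+i) * card A ^ (M-i))"
  proof (rule sum_mono)
    fix i assume "i \<in> {..M}"
    have "card (T i) \<le> card ({x \<in> words_len A (n+i). B (act d p x)} \<times> words_len A (M-i))"
      unfolding T_def by (rule card_image_le) (simp add: fin)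
    also have "\<dots> = badc A d B p (n+i) * card A ^ (M-i)"
      by (simp add: card_cartesian_product badc_def card_words_len fin)
    finally show "card (T i) \<le> badc A d B p (n+i) * card A ^ (M-i)" .
  qed
  finally show ?thesis .
qed

lemma bad_lim_reach:
  fixes d :: "'q \<Rightarrow> 'a \<Rightarrow> 'q"
  assumes fin: "finite A" and ne: "A \<noteq> {}"
    and lim: "(\<lambda>n. real (badc A d B q0 n) / real (card A) ^ n) \<longlonglongrightarrow> 0"
    and u: "u \<in> lists A"
  shows "(\<lambda>n. real (badc A d B (act d q0 u) n) / real (card A) ^ n) \<longlonglongrightarrow> 0"
proof -
  define k where "k = real (card A)"
  have kpos: "k > 0" using fin ne by (simp add: k_def card_gt_0_iff)
  define m where "m = length u"
  have "(\<lambda>n. k^m * (real (badc A d B q0 (n+m)) / k ^ (n+m))) \<longlonglongrightarrow> k^m * 0"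
    by (intro tendsto_mult tendsto_const) (rule LIMSEQ_ignore_initial_segment[OF lim[folded k_def]])
  hence L: "(\<lambda>n. k^m * (real (badc A d B q0 (n+m)) / k ^ (n+m))) \<longlonglongrightarrow> 0" by simp
  show ?thesis
  proof (rule tendsto_sandwich[OF _ _ tendsto_const L])
    show "\<forall>\<^sub>F n in sequentially. 0 \<le> real (badc A d B (act d q0 u) n) / real (card A) ^ n" by simp
    show "\<forall>\<^sub>F n in sequentially. real (badc A d B (act d q0 u) n) / real (card A) ^ n
        \<le> k^m * (real (badc A d B q0 (n+m)) / k ^ (n+m))"
    proof (rule always_eventually, rule allI)
      fix n
      have "badc A d B (act d q0 u) n \<le> badc A d B q0 (m+n)" by (rule badc_prefix[OF fin u m_def[symmetric]])
      hence "real (badc A d B (act d q0 u) n) \<le> real (badc A d B q0 (n+m))" by (simp add: add.commute)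
      moreover have "k^m * (real (badc A d B q0 (n+m)) / k ^ (n+m)) = real (badc A d B q0 (n+m)) / k^n"
        using kpos by (simp add: power_add field_simps)
      ultimately show "real (badc A d B (act d q0 u) n) / real (card A) ^ n
        \<le> k^m * (real (badc A d B q0 (n+m)) / k ^ (n+m))"
        using kpos by (simp add: k_def divide_right_mono)
    qed
  qed
qed

lemma sink_exists:
  fixes d :: "'q \<Rightarrow> 'a \<Rightarrow> 'q"
  assumes fin: "finite A" and ne: "A \<noteq> {}" and finQ: "finite Q" and q0: "q0 \<in> Q"
    and cl: "\<forall>q\<in>Q. \<forall>a\<in>A. d q a \<in> Q"
    and reach: "\<forall>q\<in>Q. \<exists>u\<in>lists A. q = act d q0 u"
    and lim: "(\<lambda>n. real (badc A d B q0 n) / real (card A) ^ n) \<longlonglongrightarrow> 0"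
    and ext: "\<forall>q\<in>Q. \<forall>q'\<in>Q. (\<forall>w\<in>lists A. \<not> B (act d q w)) \<and> (\<forall>w\<in>lists A. \<not> B (act d q' w)) \<longrightarrow> q = q'"
  shows "\<exists>s\<in>Q. (\<forall>a\<in>A. d s a = s) \<and> (\<forall>q\<in>Q. \<exists>v\<in>lists A. act d q v = s)"
proof -
  define k where "k = real (card A)"
  have kpos: "k > 0" using fin ne by (simp add: k_def card_gt_0_iff)
  obtain a0 where a0: "a0 \<in> A" using ne by blast
  define allg where "allg x = (\<forall>w\<in>lists A. \<not> B (act d x w))" for x
  define R where "R x = (\<lambda>w. act d x w) ` lists A" for x
  have RQ: "R x \<subseteq> Q" if "x \<in> Q" for x using act_closed[OF cl that] unfolding R_def by blast
  have Rtrans: "R y \<subseteq> R x" if yR: "y \<in> R x" for x y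
  proof
    fix z assume "z \<in> R y"
    then obtain v where v: "v \<in> lists A" "z = act d y v" unfolding R_def by blast
    obtain u where u: "u \<in> lists A" "y = act d x u" using yR unfolding R_def by blast
    have "z = act d x (u@v)" using u v by (simp add: act_append)
    moreover have "u@v \<in> lists A" using u v by simp
    ultimately show "z \<in> R x" unfolding R_def by (rule image_eqI)
  qed
  have Rself: "x \<in> R x" for x unfolding R_def by (rule image_eqI[where x="[]"]) auto
  have limq: "(\<lambda>n. real (badc A d B q n) / real (card A) ^ n) \<longlonglongrightarrow> 0" if qQ0: "q \<in> Q" for q
  proof -
    obtain u where u: "u \<in> lists A" "q = act d q0 u" using bspec[OF reach qQ0] by (erule bexE)
    show ?thesis unfolding u(2) by (rule bad_lim_reach[OF fin ne lim u(1)])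
  qed
  have reachall: "\<exists>w\<in>lists A. allg (act d q w)" if qQ: "q \<in> Q" for q
  proof (rule ccontr)
    assume nq: "\<not> (\<exists>w\<in>lists A. allg (act d q w))"
    have "\<exists>p. p \<in> R q \<and> (\<forall>y. y \<in> R q \<longrightarrow> card (R p) \<le> card (R y))"
      by (rule ex_has_least_nat[where P="\<lambda>y. y \<in> R q" and k=q, OF Rself])
    then obtain p where p: "p \<in> R q" and pmin: "\<forall>y. y \<in> R q \<longrightarrow> card (R p) \<le> card (R y)"
      by blast
    have pQ: "p \<in> Q" using p RQ[OF qQ] by blast
    have "\<not> allg p"
    proof
      assume ap: "allg p"
      obtain u where "u \<in> lists A" "p = act d q u" using p unfolding R_def by blast
      thus False using nq ap by blast
    qed
    then obtain w0 where w0: "w0 \<in> lists A" "B (act d p w0)" unfolding allg_def by blast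
    have good: "\<exists>v\<in>lists A. B (act d x v)" if x: "x \<in> R p" for x
    proof -
      have "R x \<subseteq> R p" using Rtrans x by blast
      moreover have "x \<in> R q" using Rtrans[OF p] x by blast
      hence "card (R p) \<le> card (R x)" using pmin by blast
      moreover have "finite (R p)" using RQ[OF pQ] finQ finite_subset by blast
      ultimately have "R x = R p" using card_seteq by blast
      hence "p \<in> R x" using Rself by blast
      then obtain v where v: "v \<in> lists A" "p = act d x v" unfolding R_def by blast
      show ?thesis using v w0 by (intro bexI[where x="v@w0"]) (auto simp: act_append)
    qed
    define V where "V x = (SOME v. v \<in> lists A \<and> B (act d x v))" for x
    have V: "V x \<in> lists A \<and> B (act d x (V x))" if "x \<in> R p" for x
      using good[OF that] unfolding V_def by (metis (mono_tags, lifting) someI_ex)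
    define M where "M = Max ((\<lambda>x. length (V x)) ` R p)"
    have finR: "finite (R p)" using RQ[OF pQ] finQ finite_subset by blast
    have win: "card A ^ n \<le> (\<Sum>i\<le>M. badc A d B p (n+i) * card A ^ (M-i))" for n
    proof (rule badc_window[OF fin a0], rule ballI)
      fix u assume "u \<in> words_len A n"
      hence x: "act d p u \<in> R p" unfolding R_def words_len_def by blast
      show "\<exists>v\<in>lists A. length v \<le> M \<and> B (act d (act d p u) v)"
        using V[OF x] x finR unfolding M_def by (intro bexI[where x="V (act d p u)"]) auto
    qed
    have ineq: "1 / k^M \<le> (\<Sum>i\<le>M. real (badc A d B p (n+i)) / k ^ (n+i))" for n
    proof -
      have "k^n \<le> (\<Sum>i\<le>M. real (badc A d B p (n+i)) * k ^ (M-i))"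
        proof -
        have "real (card A ^ n) \<le> real (\<Sum>i\<le>M. badc A d B p (n+i) * card A ^ (M-i))"
          using win[of n] by linarith
        thus ?thesis unfolding k_def by simp
      qed
      hence "k^n / k^(n+M) \<le> (\<Sum>i\<le>M. real (badc A d B p (n+i)) * k ^ (M-i)) / k^(n+M)"
        using kpos by (simp add: divide_right_mono)
      also have "\<dots> = (\<Sum>i\<le>M. real (badc A d B p (n+i)) / k ^ (n+i))"
        unfolding sum_divide_distrib
      proof (rule sum.cong[OF refl])
        fix i assume "i \<in> {..M}"
        hence "k^(n+M) = k^(n+i) * k^(M-i)" by (simp add: power_add[symmetric])
        thus "real (badc A d B p (n+i)) * k ^ (M-i) / k^(n+M) = real (badc A d B p (n+i)) / k ^ (n+i)"
          using kpos by simp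
      qed
      also have "k^n / k^(n+M) = 1 / k^M" using kpos by (simp add: power_add)
      finally show ?thesis .
    qed
    have "(\<lambda>n. (\<Sum>i\<le>M. real (badc A d B p (n+i)) / k ^ (n+i))) \<longlonglongrightarrow> (\<Sum>i\<le>M. 0)"
      by (intro tendsto_sum LIMSEQ_ignore_initial_segment) (use limq[OF pQ] in \<open>simp add: k_def\<close>)
    hence "1 / k^M \<le> 0" using ineq by (intro LIMSEQ_le_const) auto
    thus False using kpos by (smt (verit) zero_less_power divide_pos_pos)
  qed
  obtain w where w: "w \<in> lists A" "allg (act d q0 w)" using reachall[OF q0] by blast
  define s where "s = act d q0 w"
  have sQ: "s \<in> Q" unfolding s_def by (rule act_closed[OF cl q0 w(1)])
  have uniq: "x = s" if xQ: "x \<in> Q" and ax: "allg x" for x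
  proof -
    have "allg s" using w(2) s_def by simp
    thus ?thesis using ext[rule_format, OF xQ sQ] ax unfolding allg_def by blast
  qed
  show ?thesis
  proof (intro bexI[OF _ sQ] conjI ballI)
    fix a assume a: "a \<in> A"
    have "allg s" using w(2) s_def by simp
    hence "allg (d s a)" using a unfolding allg_def by (metis act_Cons Cons_in_lists_iff)
    thus "d s a = s" using uniq cl sQ a by blast
  next
    fix q assume q: "q \<in> Q"
    then obtain v where "v \<in> lists A" "allg (act d q v)" using reachall by blast
    thus "\<exists>v\<in>lists A. act d q v = s" using uniq[OF act_closed[OF cl q]] by blast
  qed
qed

lemma div_pow_lim:
  fixes r :: real
  assumes "0 \<le> r" "r < 1" "M > 0"
  shows "(\<lambda>n. r ^ (n div M)) \<longlonglongrightarrow> 0"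
proof (rule LIMSEQ_I)
  fix e :: real assume e: "e > 0"
  have "(\<lambda>j. r ^ j) \<longlonglongrightarrow> 0" using assms by (intro LIMSEQ_power_zero) auto
  then obtain N where N: "\<forall>j\<ge>N. norm (r ^ j - 0) < e" using LIMSEQ_D[OF _ e] by blast
  show "\<exists>no. \<forall>n\<ge>no. norm (r ^ (n div M) - 0) < e"
  proof (intro exI allI impI)
    fix n assume "N * M \<le> n"
    hence "N \<le> n div M" using assms(3) by (simp add: less_eq_div_iff_mult_less_eq)
    thus "norm (r ^ (n div M) - 0) < e" using N by blast
  qed
qed

lemma sink_act: "\<forall>a\<in>A. d s a = s \<Longrightarrow> w \<in> lists A \<Longrightarrow> act d s w = s"
  by (induction w) auto

lemma sink_limit:
  fixes d :: "'q \<Rightarrow> 'a \<Rightarrow> 'q"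
  assumes fin: "finite A" and ne: "A \<noteq> {}" and finQ: "finite Q" and q0: "q0 \<in> Q"
    and cl: "\<forall>q\<in>Q. \<forall>a\<in>A. d q a \<in> Q"
    and sQ: "s \<in> Q" and sink: "\<forall>a\<in>A. d s a = s"
    and reachS: "\<forall>q\<in>Q. \<exists>v\<in>lists A. act d q v = s"
  shows "(\<lambda>n. real (card {w \<in> words_len A n. act d q0 w \<in> P}) / real (card A) ^ n)
           \<longlonglongrightarrow> (if s \<in> P then 1 else 0)"
proof -
  define k where "k = card A"
  have kpos: "k > 0" using fin ne by (simp add: k_def card_gt_0_iff)
  obtain a0 where a0: "a0 \<in> A" using ne by blast
  have sact: "act d s w = s" if "w \<in> lists A" for w using sink_act[of A d s w] sink that by blast
  define B where "B = (\<lambda>x. x \<noteq> s)"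
  define W where "W m = {u \<in> words_len A m. act d q0 u \<noteq> s}" for m
  have bad0: "badc A d B s n = 0" for n
  proof -
    have E: "{w \<in> words_len A n. B (act d s w)} = {}" unfolding B_def words_len_def using sact by auto
    show ?thesis unfolding badc_def E by simp
  qed
  have H: "badc A d B q (m+n) \<le> (\<Sum>u\<in>{u \<in> words_len A m. act d q u \<noteq> s}. badc A d B (act d q u) n)" for q m n
  proof -
    have "badc A d B q (m+n) \<le> (\<Sum>u\<in>words_len A m. badc A d B (act d q u) n)" by (rule badc_split[OF fin])
    also have "\<dots> = (\<Sum>u\<in>{u \<in> words_len A m. act d q u \<noteq> s}. badc A d B (act d q u) n)"
      by (rule sum.mono_neutral_right) (auto simp: fin bad0)
    finally show ?thesis .
  qed
  define V where "V q = (SOME v. v \<in> lists A \<and> act d q v = s)" for q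
  have V: "V q \<in> lists A \<and> act d q (V q) = s" if "q \<in> Q" for q
    unfolding V_def by (rule someI_ex) (use bspec[OF reachS that] in blast)
  define M where "M = Max ((\<lambda>q. length (V q)) ` Q) + 1"
  have Mpos: "M > 0" unfolding M_def by simp
  have pad: "\<exists>v\<in>words_len A M. act d q v = s" if qQ: "q \<in> Q" for q
  proof -
    have le: "length (V q) \<le> M" unfolding M_def using finQ qQ by (simp add: le_SucI)
    define v where "v = V q @ replicate (M - length (V q)) a0"
    have "v \<in> words_len A M" using V[OF qQ] le a0 unfolding v_def words_len_def by auto
    moreover have "act d q v = s" unfolding v_def act_append using V[OF qQ] sact a0
      by (simp add: in_lists_conv_set)
    ultimately show ?thesis by blast
  qed
  have cntM: "card {u \<in> words_len A M. act d q u \<noteq> s} \<le> k^M - 1" if qQ: "q \<in> Q" for q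
  proof -
    obtain v where v: "v \<in> words_len A M" "act d q v = s" using pad[OF qQ] by blast
    have "{u \<in> words_len A M. act d q u \<noteq> s} \<subseteq> words_len A M - {v}" using v by auto
    hence "card {u \<in> words_len A M. act d q u \<noteq> s} \<le> card (words_len A M - {v})"
      by (intro card_mono) (auto simp: fin)
    also have "\<dots> = k^M - 1" using v by (simp add: card_Diff_singleton card_words_len fin k_def)
    finally show ?thesis .
  qed
  have ind: "\<forall>q\<in>Q. badc A d B q (j*M) \<le> (k^M - 1)^j" for j
  proof (induction j)
    case 0
    show ?case using badc_le[OF fin, of d B _ 0] by simp
  next
    case (Suc j)
    show ?case
    proof
      fix q assume qQ: "q \<in> Q"
      have "badc A d B q (Suc j * M) = badc A d B q (M + j*M)" by simp
      also have "\<dots> \<le> (\<Sum>u\<in>{u \<in> words_len A M. act d q u \<noteq> s}. badc A d B (act d q u) (j*M))"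
        by (rule H)
      also have "\<dots> \<le> card {u \<in> words_len A M. act d q u \<noteq> s} * (k^M - 1)^j"
      proof (rule order.trans[OF sum_bounded_above[where K="(k^M - 1)^j"]])
        fix u assume "u \<in> {u \<in> words_len A M. act d q u \<noteq> s}"
        hence "act d q u \<in> Q" using act_closed[OF cl qQ] unfolding words_len_def by blast
        thus "badc A d B (act d q u) (j*M) \<le> (k^M - 1)^j" using Suc.IH by blast
      qed simp
      also have "\<dots> \<le> (k^M - 1) * (k^M - 1)^j" by (intro mult_right_mono cntM[OF qQ]) simp
      finally show "badc A d B q (Suc j * M) \<le> (k^M - 1)^Suc j" by simp
    qed
  qed
  have mono: "badc A d B q0 n \<le> badc A d B q0 m * k^(n-m)" if "m \<le> n" for m n
  proof -
    have "badc A d B q0 n = badc A d B q0 (m + (n-m))" using that by simp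
    also have "\<dots> \<le> (\<Sum>u\<in>{u \<in> words_len A m. act d q0 u \<noteq> s}. badc A d B (act d q0 u) (n-m))"
      by (rule H)
    also have "\<dots> \<le> card {u \<in> words_len A m. act d q0 u \<noteq> s} * k^(n-m)"
      by (rule order.trans[OF sum_bounded_above[where K="k^(n-m)"]]) (auto simp: badc_le fin k_def)
    also have "card {u \<in> words_len A m. act d q0 u \<noteq> s} = badc A d B q0 m"
      by (simp add: badc_def B_def)
    finally show ?thesis .
  qed
  define r :: real where "r = (real (k^M) - 1) / real (k^M)"
  have kM: "real (k^M) \<ge> 1" using kpos by simp
  have r: "0 \<le> r" "r < 1" unfolding r_def using kM by (auto simp: divide_less_eq)
  have cbound: "real (badc A d B q0 n) / real k ^ n \<le> r ^ (n div M)" for n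
  proof -
    define j where "j = n div M"
    have jM: "j*M \<le> n" unfolding j_def by (simp add: div_times_less_eq_dividend)
    have "real (badc A d B q0 n) \<le> real (badc A d B q0 (j*M) * k^(n - j*M))"
      using mono[OF jM] by (simp only: of_nat_le_iff)
    also have "\<dots> = real (badc A d B q0 (j*M)) * real k^(n - j*M)" by simp
    also have "\<dots> \<le> real ((k^M - 1)^j) * real k^(n - j*M)"
      using ind[of j] q0 by (intro mult_right_mono) auto
    also have "real ((k^M - 1)^j) = (real (k^M) - 1)^j"
    proof -
      have kM1: "1 \<le> k^M" using kpos by simp
      show ?thesis by (simp only: of_nat_power of_nat_diff[OF kM1] of_nat_1)
    qed
    also have "(real (k^M) - 1)^j = r^j * real k ^ (j*M)"
    proof -
      have eq: "real k ^ (j*M) = (real k ^ M)^j" by (simp add: power_mult[symmetric] mult.commute)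
      show ?thesis unfolding r_def eq power_divide using kpos by simp
    qed
    finally have "real (badc A d B q0 n) \<le> r^j * (real k ^ (j*M) * real k^(n - j*M))"
      by (simp add: mult.assoc)
    also have "real k ^ (j*M) * real k^(n - j*M) = real k ^ n"
      using jM by (simp add: power_add[symmetric])
    finally show ?thesis unfolding j_def using kpos by (simp add: divide_le_eq mult.commute)
  qed
  have clim: "(\<lambda>n. real (badc A d B q0 n) / real k ^ n) \<longlonglongrightarrow> 0"
  proof (rule tendsto_sandwich[OF _ _ tendsto_const div_pow_lim[OF r Mpos]])
    show "\<forall>\<^sub>F n in sequentially. 0 \<le> real (badc A d B q0 n) / real k ^ n" by simp
    show "\<forall>\<^sub>F n in sequentially. real (badc A d B q0 n) / real k ^ n \<le> r ^ (n div M)"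
      using cbound by simp
  qed
  define C where "C n = card {w \<in> words_len A n. act d q0 w \<in> P}" for n
  have Cle: "C n \<le> k^n" for n unfolding C_def k_def card_words_len[OF fin, symmetric]
    by (intro card_mono) (auto simp: fin)
  show ?thesis
  proof (cases "s \<in> P")
    case True
    have low: "k^n \<le> C n + badc A d B q0 n" for n
    proof -
      have "words_len A n \<subseteq> {w \<in> words_len A n. act d q0 w \<in> P} \<union> {w \<in> words_len A n. B (act d q0 w)}"
        using True unfolding B_def by auto
      hence "card (words_len A n) \<le> card ({w \<in> words_len A n. act d q0 w \<in> P} \<union> {w \<in> words_len A n. B (act d q0 w)})"
        by (intro card_mono) (auto simp: fin)
      also have "\<dots> \<le> C n + badc A d B q0 n" unfolding C_def badc_def by (rule card_Un_le)
      finally show ?thesis by (simp add: card_words_len fin k_def)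
    qed
    have "(\<lambda>n. 1 - real (badc A d B q0 n) / real k ^ n) \<longlonglongrightarrow> 1 - 0"
      by (intro tendsto_diff tendsto_const clim)
    hence L1: "(\<lambda>n. 1 - real (badc A d B q0 n) / real k ^ n) \<longlonglongrightarrow> 1" by simp
    have "(\<lambda>n. real (C n) / real k ^ n) \<longlonglongrightarrow> 1"
    proof (rule tendsto_sandwich[OF _ _ L1 tendsto_const])
      show "\<forall>\<^sub>F n in sequentially. 1 - real (badc A d B q0 n) / real k ^ n \<le> real (C n) / real k ^ n"
      proof (rule always_eventually, rule allI)
        fix n
        have "real (k ^ n) \<le> real (C n + badc A d B q0 n)" using low[of n]
          by (simp only: of_nat_le_iff)
        hence "real k ^ n \<le> real (C n) + real (badc A d B q0 n)" by simp
        hence h: "real k ^ n - real (badc A d B q0 n) \<le> real (C n)" by simp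
        have K: "real k ^ n > 0" using kpos by simp
        have "1 - real (badc A d B q0 n) / real k ^ n = (real k ^ n - real (badc A d B q0 n)) / real k ^ n"
          using K by (simp add: diff_divide_distrib)
        also have "\<dots> \<le> real (C n) / real k ^ n" using h K by (intro divide_right_mono) auto
        finally show "1 - real (badc A d B q0 n) / real k ^ n \<le> real (C n) / real k ^ n" .
      qed
      show "\<forall>\<^sub>F n in sequentially. real (C n) / real k ^ n \<le> 1"
      proof (rule always_eventually, rule allI)
        fix n
        have "real (C n) \<le> real k ^ n" using Cle[of n] of_nat_le_iff[of "C n" "k^n"] by simp
        thus "real (C n) / real k ^ n \<le> 1" using kpos by simp
      qed
    qed
    thus ?thesis using True unfolding C_def k_def by simp
  next
    case False
    have "(\<lambda>n. real (C n) / real k ^ n) \<longlonglongrightarrow> 0"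
    proof (rule tendsto_sandwich[OF _ _ tendsto_const clim])
      show "\<forall>\<^sub>F n in sequentially. 0 \<le> real (C n) / real k ^ n" by simp
      show "\<forall>\<^sub>F n in sequentially. real (C n) / real k ^ n \<le> real (badc A d B q0 n) / real k ^ n"
      proof (rule always_eventually, rule allI)
        fix n
        have "C n \<le> badc A d B q0 n" unfolding C_def badc_def B_def using False
          by (intro card_mono) (auto simp: fin)
        thus "real (C n) / real k ^ n \<le> real (badc A d B q0 n) / real k ^ n"
          by (simp add: divide_right_mono)
      qed
    qed
    thus ?thesis using False unfolding C_def k_def by simp
  qed
qed

lemma regular_of_dfa:
  fixes d :: "'q \<Rightarrow> 'a \<Rightarrow> 'q"
  assumes finS: "finite S" and q0: "q0 \<in> S" and cl: "\<forall>q\<in>S. \<forall>a\<in>A. d q a \<in> S"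
  shows "regular A {w \<in> lists A. act d q0 w \<in> P}"
proof -
  obtain f :: "'q \<Rightarrow> nat" and N where fN: "f ` S = {i. i < N}" and inj: "inj_on f S"
    using finite_imp_inj_to_nat_seg[OF finS] by blast
  define d' where "d' i a = f (d (inv_into S f i) a)" for i a
  have act': "act d' (f q) w = f (act d q w)" if "q \<in> S" "w \<in> lists A" for q w
    using that
  proof (induction w arbitrary: q)
    case Nil thus ?case by simp
  next
    case (Cons a w)
    have "d' (f q) a = f (d q a)" unfolding d'_def using inv_into_f_f[OF inj Cons.prems(1)] by simp
    moreover have "d q a \<in> S" using cl Cons.prems by auto
    ultimately show ?case using Cons by simp
  qed
  have finQ': "finite (f ` S)" using finS by simp
  show ?thesis unfolding regular_def
  proof (rule conjI, blast, rule exI[of _ "f ` S"], rule exI[of _ d'], rule exI[of _ "f q0"], rule exI[of _ "f ` (P \<inter> S)"], intro conjI)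
    show "finite (f ` S)" by (rule finQ')
    show "f q0 \<in> f ` S" using q0 by blast
    show "\<forall>q\<in>f ` S. \<forall>a\<in>A. d' q a \<in> f ` S"
    proof (intro ballI)
      fix i a assume "i \<in> f ` S" "a \<in> A"
      then obtain q where "q \<in> S" "i = f q" by blast
      thus "d' i a \<in> f ` S" unfolding d'_def using inv_into_f_f[OF inj] cl \<open>a \<in> A\<close> by auto
    qed
    show "{w \<in> lists A. act d q0 w \<in> P} = {w \<in> lists A. act d' (f q0) w \<in> f ` (P \<inter> S)}"
    proof (rule Collect_cong)
      fix w
      show "(w \<in> lists A \<and> act d q0 w \<in> P) = (w \<in> lists A \<and> act d' (f q0) w \<in> f ` (P \<inter> S))"
      proof (cases "w \<in> lists A")
        case w: True
        have aS: "act d q0 w \<in> S" by (rule act_closed[OF cl q0 w])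
        show ?thesis unfolding act'[OF q0 w] using aS inj w by (auto simp: inj_on_eq_iff)
      qed simp
    qed
    show "f ` (P \<inter> S) \<subseteq> f ` S" by blast
  qed
qed

lemma lquot_sub: "lquot A u q \<subseteq> lists A" by (auto simp: lquot_def)

lemma lquot_lquot: "q \<subseteq> lists A \<Longrightarrow> lquot A v (lquot A u q) = lquot A (u@v) q"
  unfolding lquot_def by auto

lemma lquot_Nil: "q \<subseteq> lists A \<Longrightarrow> lquot A [] q = q"
  unfolding lquot_def by auto

lemma act_min: "q \<subseteq> lists A \<Longrightarrow> act (min_delta A) q w = lquot A w q"
proof (induction w arbitrary: q)
  case Nil thus ?case by (simp add: lquot_Nil)
next
  case (Cons a w)
  have "act (min_delta A) q (a#w) = act (min_delta A) (lquot A [a] q) w" by (simp add: min_delta_def)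
  also have "\<dots> = lquot A w (lquot A [a] q)" by (rule Cons.IH[OF lquot_sub])
  also have "\<dots> = lquot A (a#w) q" using lquot_lquot[OF Cons.prems] by simp
  finally show ?case .
qed

lemma finite_min_states:
  assumes "regular A L" shows "finite (min_states A L)"
proof -
  from assms obtain Q :: "nat set" and d q0 F where fin: "finite Q" and q0: "q0 \<in> Q"
    and cl: "\<forall>q\<in>Q. \<forall>a\<in>A. d q a \<in> Q" and L: "L = {w \<in> lists A. act d q0 w \<in> F}"
    unfolding regular_def by blast
  have "min_states A L \<subseteq> (\<lambda>p. {v \<in> lists A. act d p v \<in> F}) ` Q"
  proof
    fix x assume "x \<in> min_states A L"
    then obtain u where u: "u \<in> lists A" "x = lquot A u L" unfolding min_states_def by blast
    have "x = {v \<in> lists A. act d (act d q0 u) v \<in> F}"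
      unfolding u(2) L lquot_def using u(1) by (auto simp: act_append)
    moreover have "act d q0 u \<in> Q" by (rule act_closed[OF cl q0 u(1)])
    ultimately show "x \<in> (\<lambda>p. {v \<in> lists A. act d p v \<in> F}) ` Q" by blast
  qed
  thus ?thesis using fin finite_subset by blast
qed

theorem lemma6:
  fixes A :: "'a set" and L :: "'a list set" and P :: "'a list set set"
  assumes "finite A" and "A \<noteq> {}"
    and "zero_one_lang A L"
    and "P \<subseteq> min_states A L"
  shows "zero_one_lang A (Past A L P)"
proof -
  note fin = assms(1) and ne = assms(2)
  have reg: "regular A L" and lim01: "density_ratio A L \<longlonglongrightarrow> 0 \<or> density_ratio A L \<longlonglongrightarrow> 1"
    using assms(3) unfolding zero_one_lang_def by auto
  have Lsub: "L \<subseteq> lists A" using reg unfolding regular_def by blast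
  define Q where "Q = min_states A L"
  define d where "d = min_delta A"
  have init: "min_init A L = L" by (simp add: min_init_def lquot_Nil[OF Lsub])
  have finQ: "finite Q" unfolding Q_def by (rule finite_min_states[OF reg])
  have q0Q: "L \<in> Q" unfolding Q_def min_states_def using lquot_Nil[OF Lsub]
    by (intro CollectI exI[of _ "[]"]) simp
  have Qsub: "q \<subseteq> lists A" if "q \<in> Q" for q
    using that lquot_sub unfolding Q_def min_states_def by blast
  have cl: "\<forall>q\<in>Q. \<forall>a\<in>A. d q a \<in> Q"
  proof (intro ballI)
    fix q a assume q: "q \<in> Q" and a: "a \<in> A"
    then obtain u where u: "u \<in> lists A" "q = lquot A u L" unfolding Q_def min_states_def by blast
    have "d q a = lquot A (u@[a]) L" unfolding d_def min_delta_def u(2) by (rule lquot_lquot[OF Lsub])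
    moreover have "u@[a] \<in> lists A" using u a by simp
    ultimately show "d q a \<in> Q" unfolding Q_def min_states_def by blast
  qed
  have reach: "\<forall>q\<in>Q. \<exists>u\<in>lists A. q = act d L u"
  proof
    fix q assume "q \<in> Q"
    then obtain u where u: "u \<in> lists A" "q = lquot A u L" unfolding Q_def min_states_def by blast
    thus "\<exists>u\<in>lists A. q = act d L u" unfolding d_def using act_min[OF Lsub] by blast
  qed
  have memq: "([] \<in> act d q w) = (w \<in> q)" if "q \<in> Q" "w \<in> lists A" for q w
    unfolding d_def act_min[OF Qsub[OF that(1)]] lquot_def by simp
  have kpos: "card A > 0" using fin ne by (simp add: card_gt_0_iff)
  have LW: "card (L \<inter> words_len A n) \<le> card A ^ n" for n
    using card_mono[OF finite_words_len[OF fin, of n], of "L \<inter> words_len A n"]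
    by (simp add: card_words_len fin)
  have "\<exists>s\<in>Q. (\<forall>a\<in>A. d s a = s) \<and> (\<forall>q\<in>Q. \<exists>v\<in>lists A. act d q v = s)"
    using lim01
  proof
    assume lim0: "density_ratio A L \<longlonglongrightarrow> 0"
    define B where "B = (\<lambda>q::'a list set. [] \<in> q)"
    have "badc A d B L n = card (L \<inter> words_len A n)" for n
    proof -
      have "{w \<in> words_len A n. B (act d L w)} = L \<inter> words_len A n"
        unfolding B_def using memq[OF q0Q] by (auto simp: words_len_def)
      thus ?thesis unfolding badc_def by simp
    qed
    hence "(\<lambda>n. real (badc A d B L n) / real (card A) ^ n) = density_ratio A L"
      by (auto simp: density_ratio_def)
    hence limB: "(\<lambda>n. real (badc A d B L n) / real (card A) ^ n) \<longlonglongrightarrow> 0" using lim0 by simp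
    show ?thesis
    proof (rule sink_exists[OF fin ne finQ q0Q cl reach limB])
      show "\<forall>q\<in>Q. \<forall>q'\<in>Q. (\<forall>w\<in>lists A. \<not> B (act d q w)) \<and> (\<forall>w\<in>lists A. \<not> B (act d q' w)) \<longrightarrow> q = q'"
      proof (intro ballI impI)
        fix q q' assume qQ: "q \<in> Q" and q'Q: "q' \<in> Q"
          and h: "(\<forall>w\<in>lists A. \<not> B (act d q w)) \<and> (\<forall>w\<in>lists A. \<not> B (act d q' w))"
        have "q = {}" using h memq[OF qQ] Qsub[OF qQ] unfolding B_def by blast
        moreover have "q' = {}" using h memq[OF q'Q] Qsub[OF q'Q] unfolding B_def by blast
        ultimately show "q = q'" by simp
      qed
    qed
  next
    assume lim1: "density_ratio A L \<longlonglongrightarrow> 1"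
    define B where "B = (\<lambda>q::'a list set. [] \<notin> q)"
    have "badc A d B L n = card A ^ n - card (L \<inter> words_len A n)" for n
    proof -
      have "{w \<in> words_len A n. B (act d L w)} = words_len A n - L \<inter> words_len A n"
        unfolding B_def using memq[OF q0Q] by (auto simp: words_len_def)
      thus ?thesis unfolding badc_def
        by (simp add: card_Diff_subset fin card_words_len)
    qed
    hence "real (badc A d B L n) / real (card A) ^ n = 1 - density_ratio A L n" for n
      using LW[of n] kpos by (simp add: density_ratio_def of_nat_diff diff_divide_distrib)
    hence eq: "(\<lambda>n. real (badc A d B L n) / real (card A) ^ n) = (\<lambda>n. 1 - density_ratio A L n)"
      by blast
    have "(\<lambda>n. 1 - density_ratio A L n) \<longlonglongrightarrow> 1 - 1"
      by (intro tendsto_diff tendsto_const lim1)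
    hence limB: "(\<lambda>n. real (badc A d B L n) / real (card A) ^ n) \<longlonglongrightarrow> 0" unfolding eq by simp
    show ?thesis
    proof (rule sink_exists[OF fin ne finQ q0Q cl reach limB])
      show "\<forall>q\<in>Q. \<forall>q'\<in>Q. (\<forall>w\<in>lists A. \<not> B (act d q w)) \<and> (\<forall>w\<in>lists A. \<not> B (act d q' w)) \<longrightarrow> q = q'"
      proof (intro ballI impI)
        fix q q' assume qQ: "q \<in> Q" and q'Q: "q' \<in> Q"
          and h: "(\<forall>w\<in>lists A. \<not> B (act d q w)) \<and> (\<forall>w\<in>lists A. \<not> B (act d q' w))"
        have "q = lists A" using h memq[OF qQ] Qsub[OF qQ] unfolding B_def by blast
        moreover have "q' = lists A" using h memq[OF q'Q] Qsub[OF q'Q] unfolding B_def by blast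
        ultimately show "q = q'" by simp
      qed
    qed
  qed
  then obtain s where sQ: "s \<in> Q" and sink: "\<forall>a\<in>A. d s a = s"
    and reachS: "\<forall>q\<in>Q. \<exists>v\<in>lists A. act d q v = s" by blast
  have PastEq: "Past A L P = {w \<in> lists A. act d L w \<in> P}"
    unfolding Past_def init d_def ..
  have "density_ratio A (Past A L P) = (\<lambda>n. real (card {w \<in> words_len A n. act d L w \<in> P}) / real (card A) ^ n)"
  proof
    fix n
    have "Past A L P \<inter> words_len A n = {w \<in> words_len A n. act d L w \<in> P}"
      unfolding PastEq words_len_def by blast
    thus "density_ratio A (Past A L P) n = real (card {w \<in> words_len A n. act d L w \<in> P}) / real (card A) ^ n"
      unfolding density_ratio_def by simp
  qed
  moreover have "(\<lambda>n. real (card {w \<in> words_len A n. act d L w \<in> P}) / real (card A) ^ n)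
           \<longlonglongrightarrow> (if s \<in> P then 1 else 0)"
    by (rule sink_limit[OF fin ne finQ q0Q cl sQ sink reachS])
  ultimately have "density_ratio A (Past A L P) \<longlonglongrightarrow> (if s \<in> P then 1 else 0)" by simp
  hence "density_ratio A (Past A L P) \<longlonglongrightarrow> 0 \<or> density_ratio A (Past A L P) \<longlonglongrightarrow> 1"
    by (cases "s \<in> P") auto
  moreover have "regular A (Past A L P)" unfolding PastEq by (rule regular_of_dfa[OF finQ q0Q cl])
  ultimately show ?thesis unfolding zero_one_lang_def by blast
qed

end
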